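(* Consider the fixed-volume $\alpha$-cap process described in the context, and assume the thresholds preserve volume, i.e. $|A_t|=\alpha$ for all $t\ge1$. If $A_1\subseteq B(0,R/4)$ for some $R>0$, then $A_t\subseteq B(0,R)$ for all $t\ge1$.
   Context: $B(0,r)$ is the open Euclidean ball, $|\cdot|$ Lebesgue measure. Kernel assumptions: $g:\mathbb{R}^d\to[0,1]$, $g(x)=\tilde g(\|x\|)$; $g(0)=1$, $g>0$; $g$ is $L$-Lipschitz with continuous first and second derivatives; $\tilde g'(r)<0$ for $r>0$. Fixed-volume $\alpha$-cap process: $A_0\subset\mathbb{R}^d$ compact with $|A_0|=\alpha>0$; for $t\ge1$, $f_t(x)=\int\mathbbm{1}_{A_{t-1}}(y)g(x-y)\,dy$, $C_t=\inf\{C\ge0:|\{x:f_t(x)\ge C\}|<\alpha\}$, $A_t=\{x:f_t(x)\ge C_t\}$. *)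

theory Defs
  imports "HOL-Analysis.Analysis"
begin

definition kernel_ok :: "real \<Rightarrow> ('a::euclidean_space \<Rightarrow> real) \<Rightarrow> bool" where
  "kernel_ok L g \<longleftrightarrow>
     (\<forall>x. 0 \<le> g x \<and> g x \<le> 1) \<and>
     (\<exists>gt :: real \<Rightarrow> real.
        (\<forall>x. g x = gt (norm x)) \<and>
        (\<forall>r>0. \<exists>D. (gt has_real_derivative D) (at r) \<and> D < 0)) \<and>
     g 0 = 1 \<and> (\<forall>x. g x > 0) \<and>
     L-lipschitz_on UNIV g \<and>
     (\<exists>(g' :: 'a \<Rightarrow> 'a \<Rightarrow>\<^sub>L real) (g'' :: 'a \<Rightarrow> 'a \<Rightarrow>\<^sub>L ('a \<Rightarrow>\<^sub>L real)).
        (\<forall>x. (g has_derivative blinfun_apply (g' x)) (at x)) \<and>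
        (\<forall>x. (g' has_derivative blinfun_apply (g'' x)) (at x)) \<and>
        continuous_on UNIV g' \<and> continuous_on UNIV g'')"

definition cap_field :: "('a::euclidean_space \<Rightarrow> real) \<Rightarrow> 'a set \<Rightarrow> 'a \<Rightarrow> real" where
  "cap_field g A x = (\<integral>y. indicator A y * g (x - y) \<partial>lebesgue)"

definition cap_threshold :: "('a::euclidean_space \<Rightarrow> real) \<Rightarrow> real \<Rightarrow> 'a set \<Rightarrow> real" where
  "cap_threshold g \<alpha> A =
     Inf {C. C \<ge> 0 \<and> emeasure lebesgue {x. cap_field g A x \<ge> C} < ennreal \<alpha>}"

definition cap_step :: "('a::euclidean_space \<Rightarrow> real) \<Rightarrow> real \<Rightarrow> 'a set \<Rightarrow> 'a set" where
  "cap_step g \<alpha> A = {x. cap_field g A x \<ge> cap_threshold g \<alpha> A}"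

definition cap_seq :: "('a::euclidean_space \<Rightarrow> real) \<Rightarrow> real \<Rightarrow> 'a set \<Rightarrow> nat \<Rightarrow> 'a set" where
  "cap_seq g \<alpha> A0 t = (cap_step g \<alpha> ^^ t) A0"

end

theory Submission
  imports Defs
begin

definition hrefl :: "'a::euclidean_space \<Rightarrow> real \<Rightarrow> 'a \<Rightarrow> 'a" where
  "hrefl u c y = y - (2 * (y \<bullet> u - c)) *\<^sub>R u"

lemma uu: "norm u = 1 \<Longrightarrow> u \<bullet> u = 1"
  by (simp add: dot_square_norm)

lemma refl_inner: "norm u = 1 \<Longrightarrow> hrefl u c y \<bullet> u = 2 * c - y \<bullet> u"
  by (simp add: hrefl_def inner_diff_left uu algebra_simps)

lemma hrefl_hrefl[simp]: assumes "norm u = 1" shows "hrefl u c (hrefl u c y) = y"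
proof -
  have "hrefl u c (hrefl u c y) = hrefl u c y - (2 * (hrefl u c y \<bullet> u - c)) *\<^sub>R u"
    by (simp add: hrefl_def)
  also have "\<dots> = y" using assms by (simp add: refl_inner) (simp add: hrefl_def algebra_simps scaleR_diff_left)
  finally show ?thesis .
qed

lemma refl_diff: "hrefl u c x - hrefl u c y = (x - y) - (2 * ((x - y) \<bullet> u)) *\<^sub>R u"
  by (simp add: hrefl_def inner_diff_left algebra_simps scaleR_diff_left)

lemma norm_refl_lin: assumes "norm u = 1" shows "norm (v - (2 * (v \<bullet> u)) *\<^sub>R u) = norm v"
proof -
  have "(norm (v - (2 * (v \<bullet> u)) *\<^sub>R u))^2 = (norm v)^2"
    using assms by (simp add: power2_norm_eq_inner inner_diff_left inner_diff_right uu algebra_simps inner_commute)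
  then show ?thesis by (simp add: power2_eq_iff_nonneg)
qed

lemma dist_refl: "norm u = 1 \<Longrightarrow> dist (hrefl u c x) (hrefl u c y) = dist x y"
  by (simp add: dist_norm refl_diff norm_refl_lin)

lemma norm_refl_diff: "norm u = 1 \<Longrightarrow> norm (hrefl u c x - hrefl u c y) = norm (x - y)"
  using dist_refl by (simp add: dist_norm)

lemma norm_refl_sq: assumes "norm u = 1"
  shows "(norm (hrefl u c w - y))^2 = (norm (w - y))^2 + 4 * (w \<bullet> u - c) * (y \<bullet> u - c)"
  using assms by (simp add: hrefl_def power2_norm_eq_inner inner_diff_left inner_diff_right uu algebra_simps inner_commute)

lemma refl_image_ball: assumes "norm u = 1" shows "hrefl u c ` ball x r = ball (hrefl u c x) r"
proof
  show "hrefl u c ` ball x r \<subseteq> ball (hrefl u c x) r"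
    using assms by (auto simp: dist_refl)
  show "ball (hrefl u c x) r \<subseteq> hrefl u c ` ball x r"
  proof
    fix z assume "z \<in> ball (hrefl u c x) r"
    then have "hrefl u c z \<in> ball x r"
      using dist_refl[OF assms, of c x "hrefl u c z"] assms by simp
    then show "z \<in> hrefl u c ` ball x r" using assms by (metis image_eqI hrefl_hrefl)
  qed
qed

lemma refl_vimage: "norm u = 1 \<Longrightarrow> hrefl u c -` S = hrefl u c ` S"
  by (auto simp: image_iff) (metis hrefl_hrefl)+

lemma refl_borel[measurable]: "hrefl u c \<in> borel_measurable borel"
  unfolding hrefl_def by measurable

lemma refl_neg: assumes "norm u = 1" "negligible N" shows "negligible (hrefl u c ` N)"
proof (rule negligible_differentiable_image_negligible)
  show "hrefl u c differentiable_on N" unfolding hrefl_def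
    by (intro derivative_intros differentiable_on_def[THEN iffD2] ballI) (auto intro!: derivative_intros)
qed (use assms in auto)

lemma leb_borel: "S \<in> sets borel \<Longrightarrow> emeasure lebesgue S = emeasure lborel S"
  by simp

lemma open_refl_measure:
  assumes u: "norm u = 1" and U: "open U"
  shows "emeasure lebesgue (hrefl u c ` U) = emeasure lebesgue U"
proof -
  define K where "K = {(x::'a, r::real). 0 < r \<and> ball x r \<subseteq> U}"
  have cov: "\<exists>i. i \<in> K \<and> x \<in> ball (fst i) (snd i) \<and> snd i < d" if "x \<in> U" "0 < d" for x d
  proof -
    from openE[OF U \<open>x \<in> U\<close>] obtain e where e: "e > 0" "ball x e \<subseteq> U" .
    show ?thesis
      by (rule exI[of _ "(x, min e (d/2))"]) (use e that in \<open>auto simp: K_def\<close>)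
  qed
  obtain C where C: "countable C" "C \<subseteq> K"
    and pw: "pairwise (\<lambda>i j. disjnt (ball (fst i) (snd i)) (ball (fst j) (snd j))) C"
    and neg: "negligible (U - (\<Union>i\<in>C. ball (fst i) (snd i)))"
    by (rule Vitali_covering_theorem_balls[of U K fst snd, OF cov])
  define B where "B = (\<Union>i\<in>C. ball (fst i) (snd i))"
  define N where "N = U - B"
  have "\<forall>i\<in>C. ball (fst i) (snd i) \<subseteq> U"
  proof
    fix i assume "i \<in> C"
    then have "i \<in> K" using C(2) by blast
    then show "ball (fst i) (snd i) \<subseteq> U" by (cases i) (simp add: K_def)
  qed
  then have BU: "B \<subseteq> U" by (auto simp: B_def)
  have Bopen: "open B" by (auto simp: B_def)
  have UBN: "U = B \<union> N" using BU by (auto simp: N_def)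
  have Nnull: "N \<in> null_sets lebesgue" using neg by (simp add: N_def B_def negligible_iff_null_sets)
  have disj: "disjoint_family_on (\<lambda>i. ball (fst i) (snd i)) C"
    using pw by (auto simp: disjoint_family_on_def pairwise_def disjnt_def)
  have eU: "emeasure lebesgue U = (\<integral>\<^sup>+i. emeasure lebesgue (ball (fst i) (snd i)) \<partial>count_space C)"
  proof -
    have "emeasure lebesgue U = emeasure lebesgue B"
      unfolding UBN using Nnull Bopen by (intro emeasure_Un_null_set) auto
    also have "\<dots> = (\<integral>\<^sup>+i. emeasure lebesgue (ball (fst i) (snd i)) \<partial>count_space C)"
      unfolding B_def using C disj by (intro emeasure_UN_countable) auto
    finally show ?thesis .
  qed
  have inj: "inj (hrefl u c)" using u by (metis hrefl_hrefl injI)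
  have img: "hrefl u c ` U = (\<Union>i\<in>C. ball (hrefl u c (fst i)) (snd i)) \<union> hrefl u c ` N"
    unfolding UBN B_def using u by (simp add: image_Un image_UN refl_image_ball)
  have nn: "hrefl u c ` N \<in> null_sets lebesgue"
    using refl_neg[OF u] Nnull by (simp add: negligible_iff_null_sets)
  have disj2: "disjoint_family_on (\<lambda>i. ball (hrefl u c (fst i)) (snd i)) C"
  proof -
    have "disjoint_family_on (\<lambda>i. hrefl u c ` ball (fst i) (snd i)) C"
      using disj unfolding disjoint_family_on_def by (auto simp: image_Int[OF inj, symmetric])
    then show ?thesis using u by (simp add: refl_image_ball)
  qed
  have "emeasure lebesgue (hrefl u c ` U) = emeasure lebesgue (\<Union>i\<in>C. ball (hrefl u c (fst i)) (snd i))"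
  proof -
    have "open (\<Union>i\<in>C. ball (hrefl u c (fst i)) (snd i))" by auto
    then show ?thesis unfolding img using nn by (intro emeasure_Un_null_set) auto
  qed
  also have "\<dots> = (\<integral>\<^sup>+i. emeasure lebesgue (ball (hrefl u c (fst i)) (snd i)) \<partial>count_space C)"
    by (rule emeasure_UN_countable[OF _ C(1) disj2]) auto
  also have "\<dots> = (\<integral>\<^sup>+i. emeasure lebesgue (ball (fst i) (snd i)) \<partial>count_space C)"
  proof (intro nn_integral_cong)
    fix i assume "i \<in> space (count_space C)"
    then have "i \<in> K" using C(2) by auto
    then have "snd i > 0" by (cases i) (simp add: K_def)
    then show "emeasure lebesgue (ball (hrefl u c (fst i)) (snd i)) = emeasure lebesgue (ball (fst i) (snd i))"
      using emeasure_lebesgue_ball_conv_unit_ball[of "snd i" "hrefl u c (fst i)"]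
        emeasure_lebesgue_ball_conv_unit_ball[of "snd i" "fst i"] by (metis less_imp_le)
  qed
  finally show ?thesis using eU by simp
qed

lemma lborel_refl:
  assumes u: "norm u = 1"
  shows "distr lborel borel (hrefl u c) = (lborel :: 'a::euclidean_space measure)"
proof (rule sym, rule measure_eqI_generator_eq[where E="{S. open S}" and \<Omega>=UNIV and A="\<lambda>n. ball 0 (real n)"])
  show "Int_stable {S::'a set. open S}" by (auto simp: Int_stable_def)
  show "{S::'a set. open S} \<subseteq> Pow UNIV" by auto
  fix X :: "'a set" assume "X \<in> {S. open S}"
  then have X: "open X" by simp
  have "emeasure (distr lborel borel (hrefl u c)) X = emeasure lborel (hrefl u c -` X)"
    using X by (simp add: emeasure_distr)
  also have "\<dots> = emeasure lebesgue (hrefl u c -` X)"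
  proof -
    have "hrefl u c -` X \<inter> space borel \<in> sets borel"
      using X by (intro measurable_sets[OF refl_borel]) auto
    then have "hrefl u c -` X \<in> sets borel" by simp
    then show ?thesis by (rule leb_borel[symmetric])
  qed
  also have "\<dots> = emeasure lebesgue (hrefl u c ` X)"
    using u by (simp add: refl_vimage)
  also have "\<dots> = emeasure lebesgue X" using open_refl_measure[OF u X] .
  also have "\<dots> = emeasure lborel X" using X by simp
  finally show "emeasure lborel X = emeasure (distr lborel borel (hrefl u c)) X" by simp
next
  show "sets lborel = sigma_sets UNIV {S::'a set. open S}" by (simp add: sets_borel)
  show "sets (distr lborel borel (hrefl u c)) = sigma_sets UNIV {S::'a set. open S}" by (simp add: sets_borel)
  show "range (\<lambda>n. ball (0::'a) (real n)) \<subseteq> {S. open S}" by auto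
  show "(\<Union>n. ball (0::'a) (real n)) = UNIV"
  proof -
    have "x \<in> (\<Union>n. ball (0::'a) (real n))" for x :: 'a
    proof -
      obtain n :: nat where "norm x < real n" using reals_Archimedean2 by blast
      then show ?thesis by auto
    qed
    then show ?thesis by blast
  qed
  show "emeasure lborel (ball (0::'a) (real n)) \<noteq> \<infinity>" for n
    using emeasure_lborel_ball_finite[of "0::'a" "real n"] by simp
qed

lemma lborel_refl': "norm u = 1 \<Longrightarrow> distr lborel lborel (hrefl u c) = (lborel :: 'a::euclidean_space measure)"
  using lborel_refl[of u c] by (metis distr_cong sets_lborel)

lemma
  fixes u :: "'a::euclidean_space"
  assumes u: "norm u = 1"
  shows lebesgue_refl: "distr lebesgue lebesgue (hrefl u c) = lebesgue"
    and lebesgue_refl_meas: "hrefl u c \<in> lebesgue \<rightarrow>\<^sub>M lebesgue"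
proof -
  have T[measurable]: "hrefl u c \<in> lborel \<rightarrow>\<^sub>M lborel" by simp
  have d: "distr lebesgue lborel (hrefl u c) = lborel"
    using lborel_refl'[OF u, of c] by (simp add: distr_completion)
  then have eq: "null_sets lborel = null_sets (distr lebesgue lborel (hrefl u c))" by simp
  show "hrefl u c \<in> lebesgue \<rightarrow>\<^sub>M lebesgue"
    by (simp add: completion.measurable_completion2 eq measurable_completion)
  have "lebesgue = completion (distr lebesgue lborel (hrefl u c))" by (simp add: d)
  also have "\<dots> = distr lebesgue lebesgue (hrefl u c)"
    by (subst completion.completion_distr_eq) (auto simp: eq measurable_completion)
  finally show "distr lebesgue lebesgue (hrefl u c) = lebesgue" by simp
qed

lemma
  assumes k: "kernel_ok L (g :: 'a::euclidean_space \<Rightarrow> real)"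
  shows g_nonneg: "0 \<le> g x" and g_le1: "g x \<le> 1"
    and g_cont: "continuous_on UNIV g"
    and g_rad: "norm x = norm z \<Longrightarrow> g x = g z"
    and g_mono: "norm x \<le> norm z \<Longrightarrow> g z \<le> g x"
proof -
  from k show "0 \<le> g x" "g x \<le> 1" unfolding kernel_ok_def by blast+
  from k have "L-lipschitz_on UNIV g" unfolding kernel_ok_def by blast
  then show "continuous_on UNIV g" by (rule lipschitz_on_continuous_on)
  from k have g0: "g 0 = 1" and gle: "\<And>x. g x \<le> 1" unfolding kernel_ok_def by blast+
  from k have "\<exists>gt :: real \<Rightarrow> real. (\<forall>x. g x = gt (norm x)) \<and>
        (\<forall>r>0. \<exists>D. (gt has_real_derivative D) (at r) \<and> D < 0)"
    unfolding kernel_ok_def by blast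
  then obtain gt :: "real \<Rightarrow> real" where gt: "\<And>x. g x = gt (norm x)"
    and der: "\<And>r. r > 0 \<Longrightarrow> \<exists>D. (gt has_real_derivative D) (at r) \<and> D < 0"
    by blast
  show rad: "norm x = norm z \<Longrightarrow> g x = g z" for x z :: 'a by (simp add: gt)
  assume le: "norm x \<le> norm z"
  show "g z \<le> g x"
  proof (cases "norm x = norm z")
    case True
    have "g z = g x" by (rule rad) (use True in simp)
    then show ?thesis by simp
  next
    case False
    then have lt: "norm x < norm z" using le by simp
    show ?thesis
    proof (cases "x = 0")
      case True then show ?thesis using g0 gle by simp
    next
      case False
      then have "norm x > 0" by simp
      have "gt (norm z) < gt (norm x)"
      proof (rule DERIV_neg_imp_decreasing[OF lt])
        fix r assume "norm x \<le> r" "r \<le> norm z"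
        then have "r > 0" using \<open>norm x > 0\<close> by linarith
        then show "\<exists>y. DERIV gt r :> y \<and> y < 0" by (rule der)
      qed
      then show ?thesis by (simp add: gt)
    qed
  qed
qed

lemma pointwise_nonneg:
  assumes k: "kernel_ok L (g :: 'a::euclidean_space \<Rightarrow> real)" and u: "norm u = 1"
    and dom: "\<And>y. y \<in> A \<Longrightarrow> y \<bullet> u > c \<Longrightarrow> hrefl u c y \<in> A"
    and w: "w \<bullet> u > c"
  shows "0 \<le> (indicator A (hrefl u c y) - indicator A y) * (g (w - y) - g (hrefl u c w - y))"
proof -
  have sq: "(norm (hrefl u c w - y))^2 = (norm (w - y))^2 + 4 * (w \<bullet> u - c) * (y \<bullet> u - c)"
    by (rule norm_refl_sq[OF u])
  consider "y \<bullet> u > c" | "y \<bullet> u < c" | "y \<bullet> u = c" by linarith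
  then show ?thesis
  proof cases
    case 1
    have "4 * (w \<bullet> u - c) * (y \<bullet> u - c) \<ge> 0" using 1 w by simp
    then have "(norm (w - y))^2 \<le> (norm (hrefl u c w - y))^2" using sq by linarith
    then have "norm (w - y) \<le> norm (hrefl u c w - y)" by (rule power2_le_imp_le) simp
    then have a: "g (hrefl u c w - y) \<le> g (w - y)" by (rule g_mono[OF k])
    have b: "indicator A y \<le> (indicator A (hrefl u c y) :: real)"
      using dom[of y] 1 by (auto simp: indicator_def)
    show ?thesis using a b by (intro mult_nonneg_nonneg) auto
  next
    case 2
    have "4 * (w \<bullet> u - c) * (y \<bullet> u - c) \<le> 0" using 2 w
      by (simp add: mult_nonneg_nonpos)
    then have "(norm (hrefl u c w - y))^2 \<le> (norm (w - y))^2" using sq by linarith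
    then have "norm (hrefl u c w - y) \<le> norm (w - y)" by (rule power2_le_imp_le) simp
    then have a: "g (w - y) \<le> g (hrefl u c w - y)" by (rule g_mono[OF k])
    have "hrefl u c y \<bullet> u > c" using 2 refl_inner[OF u] by simp
    then have "hrefl u c y \<in> A \<Longrightarrow> y \<in> A" using dom[of "hrefl u c y"] u by simp
    then have b: "indicator A (hrefl u c y) \<le> (indicator A y :: real)"
      by (auto simp: indicator_def)
    show ?thesis using a b by (intro mult_nonpos_nonpos) auto
  next
    case 3
    then have "hrefl u c y = y" by (simp add: hrefl_def)
    then show ?thesis by simp
  qed
qed

lemma g_shift_meas:
  assumes k: "kernel_ok L (g :: 'a::euclidean_space \<Rightarrow> real)"
  shows "(\<lambda>y. g (a - y)) \<in> borel_measurable lebesgue"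
proof -
  have "continuous_on UNIV (\<lambda>y. g (a - y))"
  proof (rule continuous_on_compose2[OF g_cont[OF k]])
    show "continuous_on UNIV (\<lambda>y::'a. a - y)" by (intro continuous_intros)
  qed auto
  then have "(\<lambda>y. g (a - y)) \<in> borel_measurable borel" by (rule borel_measurable_continuous_onI)
  then have "(\<lambda>y. g (a - y)) \<in> borel_measurable lborel" by simp
  then show ?thesis by (rule measurable_completion)
qed

lemma cap_integrable:
  assumes k: "kernel_ok L (g :: 'a::euclidean_space \<Rightarrow> real)"
    and A: "A \<in> sets lebesgue" and fin: "emeasure lebesgue A < \<infinity>"
  shows "integrable lebesgue (\<lambda>y. indicator A y * g (a - y))"
proof (rule Bochner_Integration.integrable_bound[of lebesgue "indicator A :: 'a \<Rightarrow> real"])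
  show "integrable lebesgue (indicator A :: 'a \<Rightarrow> real)" using A fin by simp
  show "(\<lambda>y. indicator A y * g (a - y)) \<in> borel_measurable lebesgue"
  proof (rule borel_measurable_times)
    show "indicator A \<in> borel_measurable lebesgue" using A by simp
    show "(\<lambda>y. g (a - y)) \<in> borel_measurable lebesgue" by (rule g_shift_meas[OF k])
  qed
  show "AE x in lebesgue. norm (indicator A x * g (a - x)) \<le> norm (indicator A x :: real)"
  proof (rule AE_I2)
    fix x
    have "0 \<le> g (a - x)" "g (a - x) \<le> 1" using g_nonneg[OF k] g_le1[OF k] by blast+
    then show "norm (indicator A x * g (a - x)) \<le> norm (indicator A x :: real)"
      by (cases "x \<in> A") auto
  qed
qed

lemma cap_field_refl:
  assumes k: "kernel_ok L (g :: 'a::euclidean_space \<Rightarrow> real)" and u: "norm u = 1"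
    and A: "A \<in> sets lebesgue" and fin: "emeasure lebesgue A < \<infinity>"
    and dom: "\<And>y. y \<in> A \<Longrightarrow> y \<bullet> u > c \<Longrightarrow> hrefl u c y \<in> A"
    and w: "w \<bullet> u > c"
  shows "cap_field g A w \<le> cap_field g A (hrefl u c w)"
proof -
  define s where "s = hrefl u c w"
  define P where "P y = indicator A y * g (s - y)" for y
  define Q where "Q y = indicator A y * g (w - y)" for y
  have Pi: "integrable lebesgue P" unfolding P_def by (rule cap_integrable[OF k A fin])
  have Qi: "integrable lebesgue Q" unfolding Q_def by (rule cap_integrable[OF k A fin])
  have Pm: "P \<in> borel_measurable lebesgue" using Pi by auto
  have Qm: "Q \<in> borel_measurable lebesgue" using Qi by auto
  note M = lebesgue_refl_meas[OF u, of c]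
  note D = lebesgue_refl[OF u, of c]
  have Psi: "integrable lebesgue (\<lambda>y. P (hrefl u c y))"
    using integrable_distr_eq[OF M Pm] Pi D by simp
  have Qsi: "integrable lebesgue (\<lambda>y. Q (hrefl u c y))"
    using integrable_distr_eq[OF M Qm] Qi D by simp
  have Ps: "integral\<^sup>L lebesgue (\<lambda>y. P (hrefl u c y)) = integral\<^sup>L lebesgue P"
    using integral_distr[OF M Pm] D by simp
  have Qs: "integral\<^sup>L lebesgue (\<lambda>y. Q (hrefl u c y)) = integral\<^sup>L lebesgue Q"
    using integral_distr[OF M Qm] D by simp
  have pw: "0 \<le> P y - Q y + P (hrefl u c y) - Q (hrefl u c y)" for y
  proof -
    have ws: "hrefl u c s = w" using u by (simp add: s_def)
    have e1: "g (s - hrefl u c y) = g (w - y)"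
      by (rule g_rad[OF k]) (simp add: s_def norm_refl_diff[OF u])
    have e2: "g (w - hrefl u c y) = g (s - y)"
    proof (rule g_rad[OF k])
      show "norm (w - hrefl u c y) = norm (s - y)"
        using norm_refl_diff[OF u, of c s y] ws by simp
    qed
    have "P y - Q y + P (hrefl u c y) - Q (hrefl u c y)
        = (indicator A (hrefl u c y) - indicator A y) * (g (w - y) - g (s - y))"
      by (simp add: P_def Q_def e1 e2 algebra_simps)
    then show ?thesis using pointwise_nonneg[OF k u dom w, of y] by (simp add: s_def)
  qed
  have "0 \<le> integral\<^sup>L lebesgue (\<lambda>y. P y - Q y + P (hrefl u c y) - Q (hrefl u c y))"
    by (rule integral_nonneg_AE) (use pw in auto)
  also have "\<dots> = integral\<^sup>L lebesgue P - integral\<^sup>L lebesgue Q + integral\<^sup>L lebesgue (\<lambda>y. P (hrefl u c y)) - integral\<^sup>L lebesgue (\<lambda>y. Q (hrefl u c y))"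
    using Pi Qi Psi Qsi by simp
  also have "\<dots> = 2 * (integral\<^sup>L lebesgue P - integral\<^sup>L lebesgue Q)"
    using Ps Qs by simp
  finally have "integral\<^sup>L lebesgue Q \<le> integral\<^sup>L lebesgue P" by simp
  then show ?thesis unfolding cap_field_def P_def Q_def s_def .
qed

lemma cap_seq_Suc: "cap_seq g \<alpha> A0 (Suc t) = cap_step g \<alpha> (cap_seq g \<alpha> A0 t)"
  by (simp add: cap_seq_def)

lemma refl_hit:
  fixes w z :: "'a::euclidean_space"
  assumes R: "R > 0" and w: "norm w \<ge> R" and z: "norm z \<le> R / 2"
  shows "\<exists>u c. norm u = 1 \<and> R / 4 \<le> c \<and> w \<bullet> u > c \<and> hrefl u c w = z"
proof -
  define d where "d = norm (w - z)"
  have "w \<noteq> z" using R w z by auto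
  then have d0: "d > 0" by (simp add: d_def)
  define u where "u = (1 / d) *\<^sub>R (w - z)"
  define c where "c = (w \<bullet> w - z \<bullet> z) / (2 * d)"
  have nu: "norm u = 1" using d0 by (simp add: u_def d_def)
  have dd: "d^2 = w \<bullet> w - 2 * (w \<bullet> z) + z \<bullet> z"
    by (simp add: d_def power2_norm_eq_inner inner_diff_left inner_diff_right inner_commute)
  have wu: "w \<bullet> u = (w \<bullet> w - w \<bullet> z) / d"
    by (simp add: u_def inner_diff_right)
  have key: "w \<bullet> u - c = d / 2"
  proof -
    have "w \<bullet> u - c = (2 * (w \<bullet> w - w \<bullet> z) - (w \<bullet> w - z \<bullet> z)) / (2 * d)"
      using d0 by (simp add: wu c_def field_simps)
    also have "\<dots> = d^2 / (2 * d)" by (simp add: dd algebra_simps)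
    also have "\<dots> = d / 2" using d0 by (simp add: power2_eq_square)
    finally show ?thesis .
  qed
  have hz: "hrefl u c w = z"
  proof -
    have "hrefl u c w = w - (2 * (d / 2)) *\<^sub>R u" by (simp add: hrefl_def key)
    also have "\<dots> = z" using d0 by (simp add: u_def)
    finally show ?thesis .
  qed
  have c4: "R / 4 \<le> c"
  proof -
    have ww: "w \<bullet> w = (norm w)^2" and zz: "z \<bullet> z = (norm z)^2" by (simp_all add: power2_norm_eq_inner)
    have "d \<le> norm w + norm z" unfolding d_def by (rule norm_triangle_ineq4)
    have "norm w - norm z \<ge> R / 2" using w z by linarith
    have "(norm w)^2 - (norm z)^2 = (norm w - norm z) * (norm w + norm z)" by (simp add: power2_eq_square algebra_simps)
    also have "\<dots> \<ge> (R / 2) * (norm w + norm z)"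
      using \<open>norm w - norm z \<ge> R / 2\<close> by (intro mult_right_mono) auto
    finally have "(norm w)^2 - (norm z)^2 \<ge> (R / 2) * (norm w + norm z)" .
    moreover have "(R / 2) * (norm w + norm z) \<ge> (R / 2) * d"
      using \<open>d \<le> norm w + norm z\<close> R by (intro mult_left_mono) auto
    ultimately have "w \<bullet> w - z \<bullet> z \<ge> (R / 2) * d" using ww zz by linarith
    then have "(R / 2) * d / (2 * d) \<le> (w \<bullet> w - z \<bullet> z) / (2 * d)"
      using d0 by (intro divide_right_mono) auto
    then show ?thesis using d0 by (simp add: c_def)
  qed
  have "w \<bullet> u > c" using key d0 by linarith
  then show ?thesis using nu c4 hz by blast
qed

theorem lemma8:
  fixes g :: "'a::euclidean_space \<Rightarrow> real" and L \<alpha> R :: real and A0 :: "'a set"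
  assumes "kernel_ok L g"
    and "\<alpha> > 0" and "compact A0" and "emeasure lebesgue A0 = ennreal \<alpha>"
    and "\<forall>t\<ge>1. emeasure lebesgue (cap_seq g \<alpha> A0 t) = ennreal \<alpha>"
    and "R > 0"
    and "cap_seq g \<alpha> A0 1 \<subseteq> ball 0 (R / 4)"
  shows "\<forall>t\<ge>1. cap_seq g \<alpha> A0 t \<subseteq> ball 0 R"
proof -
  note k = assms(1)
  define S where "S t = cap_seq g \<alpha> A0 t" for t
  have em: "emeasure lebesgue (S t) = ennreal \<alpha>" if "t \<ge> 1" for t
    using assms(5) that by (simp add: S_def)
  have meas: "S t \<in> sets lebesgue" if "t \<ge> 1" for t
  proof (rule ccontr)
    assume "S t \<notin> sets lebesgue"
    then have "emeasure lebesgue (S t) = 0" by (rule emeasure_notin_sets)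
    then show False using em[OF that] assms(2) by simp
  qed
  have fin: "emeasure lebesgue (S t) < \<infinity>" if "t \<ge> 1" for t
    using em[OF that] by simp
  have mS: "measure lebesgue (S t) = \<alpha>" if "t \<ge> 1" for t
    using em[OF that] assms(2) by (simp add: measure_def)
  define domP where "domP A \<longleftrightarrow> (\<forall>u c y. norm u = 1 \<longrightarrow> R / 4 \<le> c \<longrightarrow> y \<in> A \<longrightarrow> y \<bullet> u > c \<longrightarrow> hrefl u c y \<in> A)"
    for A :: "'a set"
  have dom: "domP (S t)" if "t \<ge> 1" for t
    using that
  proof (induction t rule: dec_induct)
    case base
    show ?case unfolding domP_def
    proof (intro allI impI)
      fix u c and y :: 'a
      assume u: "norm u = 1" and c: "R / 4 \<le> c" and y: "y \<in> S 1" and yu: "y \<bullet> u > c"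
      have "norm y < R / 4" using y assms(7) by (auto simp: S_def)
      moreover have "y \<bullet> u \<le> norm y * norm u" by (rule norm_cauchy_schwarz)
      ultimately show "hrefl u c y \<in> S 1" using u c yu by simp
    qed
  next
    case (step t)
    show ?case unfolding domP_def
    proof (intro allI impI)
      fix u c and y :: 'a
      assume u: "norm u = 1" and c: "R / 4 \<le> c" and y: "y \<in> S (Suc t)" and yu: "y \<bullet> u > c"
      have d: "\<And>y. y \<in> S t \<Longrightarrow> y \<bullet> u > c \<Longrightarrow> hrefl u c y \<in> S t"
        using step.IH u c unfolding domP_def by blast
      have "cap_field g (S t) y \<le> cap_field g (S t) (hrefl u c y)"
        by (rule cap_field_refl[OF k u meas[OF step.hyps(1)] fin[OF step.hyps(1)] d yu])
      then show "hrefl u c y \<in> S (Suc t)"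
        using y by (simp add: S_def cap_seq_Suc cap_step_def)
    qed
  qed
  have ball_fin: "ball (0::'a) r \<in> fmeasurable lebesgue" for r
    using emeasure_lborel_ball_finite[of "0::'a" r] by (simp add: fmeasurable_def)
  have c1: "\<alpha> \<le> measure lebesgue (ball (0::'a) (R / 4))"
  proof -
    have "measure lebesgue (S 1) \<le> measure lebesgue (ball (0::'a) (R / 4))"
      using assms(7) meas[of 1] ball_fin by (intro measure_mono_fmeasurable) (auto simp: S_def)
    then show ?thesis using mS[of 1] by simp
  qed
  have c2: "measure lebesgue (ball (0::'a) (R / 4)) < measure lebesgue (ball (0::'a) (R / 2))"
  proof -
    have e: "measure lebesgue (ball (0::'a) r) = measure lborel (ball (0::'a) r)" for r by simp
    have p: "measure lborel (ball (0::'a) 1) > 0" by (rule content_ball_pos) simp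
    have "(R / 4) ^ DIM('a) < (R / 2) ^ DIM('a)"
      using assms(6) by (intro power_strict_mono) auto
    then have "(R / 4) ^ DIM('a) * measure lborel (ball (0::'a) 1) < (R / 2) ^ DIM('a) * measure lborel (ball (0::'a) 1)"
      using p by simp
    then show ?thesis unfolding e using assms(6)
      by (simp add: content_ball_conv_unit_ball[of "R / 4"] content_ball_conv_unit_ball[of "R / 2"])
  qed
  show ?thesis
  proof (intro allI impI subsetI)
    fix t and w :: 'a
    assume t: "1 \<le> t" and wS: "w \<in> cap_seq g \<alpha> A0 t"
    show "w \<in> ball 0 R"
    proof (rule ccontr)
      assume "w \<notin> ball 0 R"
      then have wR: "norm w \<ge> R" by simp
      have sub: "ball (0::'a) (R / 2) \<subseteq> S t"
      proof
        fix z :: 'a assume "z \<in> ball 0 (R / 2)"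
        then have "norm z \<le> R / 2" by simp
        then obtain u c where u: "norm u = 1" "R / 4 \<le> c" "w \<bullet> u > c" "hrefl u c w = z"
          using refl_hit[OF assms(6) wR] by blast
        have "hrefl u c w \<in> S t" using dom[OF t] u wS unfolding domP_def S_def by blast
        then show "z \<in> S t" using u by simp
      qed
      have "measure lebesgue (ball (0::'a) (R / 2)) \<le> measure lebesgue (S t)"
        using sub meas[OF t] fin[OF t] by (intro measure_mono_fmeasurable) (auto simp: fmeasurable_def)
      then show False using mS[OF t] c1 c2 by linarith
    qed
  qed
qed

end
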